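(* Let $\lambda$ be a partition with $n$ parts, let $\beta \in UBP_\lambda(n)$, and set $\delta := \Delta_\lambda(\beta)$. Let $\pi$ be a permutation of $[n]$ and let $\Lambda = (\Lambda_1,\dots,\Lambda_n) \in \mathcal{LD}_\lambda(\beta;\pi)$. Then for each $m \in [n]$ the component $\Lambda_m$ passes through the point $(\lambda_{\pi_m} + n - \pi_m, \delta_{\pi_m})$ and from there proceeds only by southerly steps to its endpoint $(\lambda_{\pi_m} + n - \pi_m, \beta_{\pi_m})$.
   Context: Fix an integer $n \geq 1$ and write $[k] = \{1,\dots,k\}$. A partition is $\lambda = (\lambda_1,\dots,\lambda_n)$ with $\lambda_1 \geq \dots \geq \lambda_n \geq 0$ integers. Let $R_\lambda \subseteq [n-1]$ be the set of $q \in [n-1]$ with $\lambda_q > \lambda_{q+1}$; write its elements $q_1 < \dots < q_r$, and set $q_0 := 0$, $q_{r+1} := n$. For $h \in [r+1]$ the $h$-th carrel is the index interval $\{q_{h-1}+1,\dots,q_h\}$. A $\lambda$-tuple is an $n$-tuple $\beta$ with entries in $[n]$, considered with this carrel structure; it is upper if $\beta_i \geq i$ for all $i$. $U_\lambda(n)$ is the set of upper $\lambda$-tuples. Critical indices: for $\beta \in U_\lambda(n)$ and $h \in [r+1]$, set $x_1 := q_h$; given $x_{u-1}$, if some index $x$ with $q_{h-1} < x < x_{u-1}$ satisfies $\beta_{x_{u-1}} - \beta_x > x_{u-1} - x$, let $x_u$ be the largest such $x$, otherwise stop. The $x_u$ are the critical indices of $\beta$ in carrel $h$. For $i \in [n]$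 let $x(i)$ be the smallest critical index in the carrel of $i$ with $x(i) \geq i$. The $\lambda$-core is $\Delta_\lambda(\beta) := \delta$ with $\delta_i := \beta_{x(i)} - (x(i)-i)$, and the $\lambda$-platform is $\Xi_\lambda(\beta) := \xi$ with $\xi_i := \beta_{x(i)}$. $UBP_\lambda(n)$ is the set of $\beta \in U_\lambda(n)$ with $\beta_i \leq \Xi_\lambda(\beta)_i$ for all $i$. Lattice paths: lattice points are integer pairs $(a,b)$ with $a \geq 0$, $b \geq 1$. A lattice path is a sequence of lattice points each consecutive step of which is an easterly step $(a,b) \to (a+1,b)$ or a southerly step $(a,b) \to (a,b+1)$. An $n$-path is $(\Lambda_1,\dots,\Lambda_n)$ with $\Lambda_m$ a lattice path starting at $(n-m,m)$. The terminals of $(\lambda,\beta)$ are $P_m := (\lambda_m + n - m, \beta_m)$, $m \in [n]$. For a permutation $\pi$ of $[n]$, $\mathcal{LD}_\lambda(\beta;\pi)$ is the set of $n$-paths with $\Lambda_m$ ending at $P_{\pi_m}$ for every $m$ and no two distinct components sharing a lattice point. *)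

theory Defs
  imports Main "HOL-Combinatorics.Permutations"
begin

text \<open>Indices run over {1..n}; a partition / tuple is a function nat => nat
  whose values at indices 1..n are the entries.\<close>

definition is_partition :: "nat \<Rightarrow> (nat \<Rightarrow> nat) \<Rightarrow> bool" where
  "is_partition n lam \<longleftrightarrow> (\<forall>i. 1 \<le> i \<and> i < n \<longrightarrow> lam (Suc i) \<le> lam i)"

definition R_set :: "nat \<Rightarrow> (nat \<Rightarrow> nat) \<Rightarrow> nat set" where
  "R_set n lam = {q. 1 \<le> q \<and> q \<le> n - 1 \<and> lam q > lam (Suc q)}"

text \<open>Left boundary q_{h-1} and right boundary q_h of the carrel containing index i.\<close>
definition carrel_lo :: "nat \<Rightarrow> (nat \<Rightarrow> nat) \<Rightarrow> nat \<Rightarrow> nat" where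
  "carrel_lo n lam i = Max ({0} \<union> {q \<in> R_set n lam. q < i})"

definition carrel_hi :: "nat \<Rightarrow> (nat \<Rightarrow> nat) \<Rightarrow> nat \<Rightarrow> nat" where
  "carrel_hi n lam i = Min ({n} \<union> {q \<in> R_set n lam. i \<le> q})"

definition is_lambda_tuple :: "nat \<Rightarrow> (nat \<Rightarrow> nat) \<Rightarrow> bool" where
  "is_lambda_tuple n beta \<longleftrightarrow> (\<forall>i. 1 \<le> i \<and> i \<le> n \<longrightarrow> 1 \<le> beta i \<and> beta i \<le> n)"

definition U_set :: "nat \<Rightarrow> (nat \<Rightarrow> nat) set" where
  "U_set n = {beta. is_lambda_tuple n beta \<and> (\<forall>i. 1 \<le> i \<and> i \<le> n \<longrightarrow> i \<le> beta i)}"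

text \<open>Candidates for the next critical index below x (lo is q_{h-1}).\<close>
definition crit_cands :: "(nat \<Rightarrow> nat) \<Rightarrow> nat \<Rightarrow> nat \<Rightarrow> nat set" where
  "crit_cands beta lo x =
     {y. lo < y \<and> y < x \<and> int (beta x) - int (beta y) > int x - int y}"

inductive_set crit_set :: "(nat \<Rightarrow> nat) \<Rightarrow> nat \<Rightarrow> nat \<Rightarrow> nat set"
  for beta :: "nat \<Rightarrow> nat" and lo :: nat and hi :: nat where
  start: "hi \<in> crit_set beta lo hi"
| step: "x \<in> crit_set beta lo hi \<Longrightarrow> crit_cands beta lo x \<noteq> {}
         \<Longrightarrow> Max (crit_cands beta lo x) \<in> crit_set beta lo hi"

definition crit_of :: "nat \<Rightarrow> (nat \<Rightarrow> nat) \<Rightarrow> (nat \<Rightarrow> nat) \<Rightarrow> nat \<Rightarrow> nat" where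
  "crit_of n lam beta i =
     Min {x \<in> crit_set beta (carrel_lo n lam i) (carrel_hi n lam i). i \<le> x}"

definition core :: "nat \<Rightarrow> (nat \<Rightarrow> nat) \<Rightarrow> (nat \<Rightarrow> nat) \<Rightarrow> nat \<Rightarrow> int" where
  "core n lam beta i =
     int (beta (crit_of n lam beta i)) - (int (crit_of n lam beta i) - int i)"

definition platform :: "nat \<Rightarrow> (nat \<Rightarrow> nat) \<Rightarrow> (nat \<Rightarrow> nat) \<Rightarrow> nat \<Rightarrow> nat" where
  "platform n lam beta i = beta (crit_of n lam beta i)"

definition UBP_set :: "nat \<Rightarrow> (nat \<Rightarrow> nat) \<Rightarrow> (nat \<Rightarrow> nat) set" where
  "UBP_set n lam = {beta \<in> U_set n. \<forall>i. 1 \<le> i \<and> i \<le> n \<longrightarrow> beta i \<le> platform n lam beta i}"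

definition lattice_point :: "nat \<times> nat \<Rightarrow> bool" where
  "lattice_point p \<longleftrightarrow> 1 \<le> snd p"

definition is_step :: "nat \<times> nat \<Rightarrow> nat \<times> nat \<Rightarrow> bool" where
  "is_step p p' \<longleftrightarrow> p' = (Suc (fst p), snd p) \<or> p' = (fst p, Suc (snd p))"

definition lattice_path :: "(nat \<times> nat) list \<Rightarrow> bool" where
  "lattice_path L \<longleftrightarrow> L \<noteq> [] \<and> (\<forall>p \<in> set L. lattice_point p) \<and>
     (\<forall>j. Suc j < length L \<longrightarrow> is_step (L ! j) (L ! Suc j))"

definition n_path :: "nat \<Rightarrow> (nat \<Rightarrow> (nat \<times> nat) list) \<Rightarrow> bool" where
  "n_path n Lam \<longleftrightarrow> (\<forall>m. 1 \<le> m \<and> m \<le> n \<longrightarrow>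
     lattice_path (Lam m) \<and> hd (Lam m) = (n - m, m))"

definition terminal :: "nat \<Rightarrow> (nat \<Rightarrow> nat) \<Rightarrow> (nat \<Rightarrow> nat) \<Rightarrow> nat \<Rightarrow> nat \<times> nat" where
  "terminal n lam beta m = (lam m + n - m, beta m)"

definition LD_set :: "nat \<Rightarrow> (nat \<Rightarrow> nat) \<Rightarrow> (nat \<Rightarrow> nat) \<Rightarrow> (nat \<Rightarrow> nat)
    \<Rightarrow> (nat \<Rightarrow> (nat \<times> nat) list) set" where
  "LD_set n lam beta pi = {Lam. n_path n Lam \<and>
     (\<forall>m. 1 \<le> m \<and> m \<le> n \<longrightarrow> last (Lam m) = terminal n lam beta (pi m)) \<and>
     (\<forall>m m'. 1 \<le> m \<and> m \<le> n \<and> 1 \<le> m' \<and> m' \<le> n \<and> m \<noteq> m' \<longrightarrow>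
        set (Lam m) \<inter> set (Lam m') = {})}"

end

theory Submission imports Defs begin

lemma path_sum:
  assumes "lattice_path L" "k < length L"
  shows "fst (L!k) + snd (L!k) = fst (hd L) + snd (hd L) + k"
  using assms(2)
proof (induction k)
  case 0
  then show ?case using assms(1) by (simp add: lattice_path_def hd_conv_nth)
next
  case (Suc k)
  then have "is_step (L!k) (L!Suc k)" using assms(1) unfolding lattice_path_def by blast
  then show ?case using Suc by (auto simp: is_step_def)
qed

lemma path_mono:
  assumes "lattice_path L" "k \<le> k'" "k' < length L"
  shows "fst (L!k) \<le> fst (L!k') \<and> snd (L!k) \<le> snd (L!k')"
  using assms(2,3)
proof (induction k' rule: dec_induct)
  case base
  then show ?case by simp
next
  case (step k')
  then have "is_step (L!k') (L!Suc k')" using assms(1) unfolding lattice_path_def by blast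
  then show ?case using step by (auto simp: is_step_def)
qed

lemma path_last: "lattice_path L \<Longrightarrow> last L = L ! (length L - 1)"
  by (simp add: lattice_path_def last_conv_nth)

lemma path_tail:
  assumes "lattice_path L" "k < length L" "fst (L!k) = fst (last L)"
  shows "\<forall>j. k \<le> j \<and> Suc j < length L \<longrightarrow> L ! Suc j = (fst (L ! j), Suc (snd (L ! j)))"
proof (intro allI impI)
  fix j assume j: "k \<le> j \<and> Suc j < length L"
  have st: "is_step (L!j) (L!Suc j)" using assms(1) j unfolding lattice_path_def by blast
  have "fst (L!k) \<le> fst (L!j)" using path_mono[OF assms(1), of k j] j by auto
  moreover have "fst (L!Suc j) \<le> fst (last L)"
    using path_mono[OF assms(1), of "Suc j" "length L - 1"] j path_last[OF assms(1)] by auto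
  ultimately show "L ! Suc j = (fst (L ! j), Suc (snd (L ! j)))"
    using st assms(3) by (auto simp: is_step_def)
qed

lemma crit_bounds:
  assumes "y \<in> crit_set beta lo hi" "lo < hi"
  shows "lo < y \<and> y \<le> hi"
  using assms(1)
proof (induction rule: crit_set.induct)
  case start
  then show ?case using assms(2) by simp
next
  case (step x)
  have fin: "finite (crit_cands beta lo x)" by (rule finite_subset[of _ "{..<x}"]) (auto simp: crit_cands_def)
  have "Max (crit_cands beta lo x) \<in> crit_cands beta lo x" using Max_in[OF fin step(2)] .
  then show ?case using step by (auto simp: crit_cands_def)
qed

lemma R_fin: "finite (R_set n lam)"
  by (rule finite_subset[of _ "{..n}"]) (auto simp: R_set_def)

lemma lo_lt: "1 \<le> i \<Longrightarrow> carrel_lo n lam i < i"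
  unfolding carrel_lo_def using R_fin[of n lam] by (subst Max_less_iff) auto

lemma hi_ge: "i \<le> n \<Longrightarrow> i \<le> carrel_hi n lam i \<and> carrel_hi n lam i \<le> n"
  unfolding carrel_hi_def using R_fin[of n lam] by (auto simp: Min_ge_iff)

lemma hi_le_R: "q \<in> R_set n lam \<Longrightarrow> i \<le> q \<Longrightarrow> carrel_hi n lam i \<le> q"
  unfolding carrel_hi_def using R_fin[of n lam] by (intro Min_le) auto

lemma hi_in: "carrel_hi n lam i = n \<or> (carrel_hi n lam i \<in> R_set n lam \<and> i \<le> carrel_hi n lam i)"
proof -
  have "carrel_hi n lam i \<in> {n} \<union> {q \<in> R_set n lam. i \<le> q}"
    unfolding carrel_hi_def using R_fin[of n lam] by (intro Min_in) auto
  then show ?thesis by auto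
qed

lemma lo_same:
  assumes "i \<le> j" "j \<le> carrel_hi n lam i"
  shows "carrel_lo n lam j = carrel_lo n lam i"
proof -
  have "{q \<in> R_set n lam. q < j} = {q \<in> R_set n lam. q < i}"
    using hi_le_R[of _ n lam i] assms by fastforce
  then show ?thesis unfolding carrel_lo_def by simp
qed

lemma hi_same:
  assumes "i \<le> j" "j \<le> carrel_hi n lam i" "j \<le> n"
  shows "carrel_hi n lam j = carrel_hi n lam i"
proof (rule antisym)
  show "carrel_hi n lam j \<le> carrel_hi n lam i"
    using hi_in[of n lam i] hi_le_R[of _ n lam j] hi_ge[of j n lam] assms by auto
  show "carrel_hi n lam i \<le> carrel_hi n lam j"
    using hi_in[of n lam j] hi_le_R[of _ n lam i] hi_ge[of i n lam] assms by auto
qed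


lemma crit_facts:
  assumes part: "is_partition n lam" and ubp: "beta \<in> UBP_set n lam"
    and i: "1 \<le> i" "i \<le> n"
  shows "i \<le> crit_of n lam beta i \<and> crit_of n lam beta i \<le> n
    \<and> crit_of n lam beta i \<le> beta (crit_of n lam beta i)
    \<and> (\<forall>j. i \<le> j \<and> j \<le> crit_of n lam beta i \<longrightarrow>
          lam j = lam (crit_of n lam beta i)
        \<and> int (beta (crit_of n lam beta i)) - int (beta j) \<le> int (crit_of n lam beta i) - int j
        \<and> beta j \<le> beta (crit_of n lam beta i))"
proof -
  define lo where "lo = carrel_lo n lam i"
  define hi where "hi = carrel_hi n lam i"
  define C where "C = crit_set beta lo hi"
  define x where "x = crit_of n lam beta i"
  have lohi: "lo < i" "i \<le> hi" "hi \<le> n" using lo_lt[OF i(1)] hi_ge[OF i(2)] lo_def hi_def by auto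
  have Cb: "\<And>y. y \<in> C \<Longrightarrow> lo < y \<and> y \<le> hi" using crit_bounds lohi C_def by fastforce
  define S where "S = {y \<in> C. i \<le> y}"
  have finS: "finite S" by (rule finite_subset[of _ "{..hi}"]) (use Cb S_def in auto)
  have hiS: "hi \<in> S" using lohi by (simp add: S_def C_def crit_set.start)
  have xdef: "x = Min S" unfolding x_def crit_of_def S_def C_def lo_def hi_def by simp
  have xS: "x \<in> S" using xdef finS hiS Min_in by blast
  have xmin: "\<And>y. y \<in> C \<Longrightarrow> i \<le> y \<Longrightarrow> x \<le> y" using xdef finS S_def Min_le by blast
  have xC: "x \<in> C" and ix: "i \<le> x" using xS S_def by auto
  have xhi: "x \<le> hi" using Cb xC by auto
  have bU: "beta \<in> U_set n" and bP: "\<And>j. 1 \<le> j \<and> j \<le> n \<Longrightarrow> beta j \<le> platform n lam beta j"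
    using ubp by (auto simp: UBP_set_def)
  have xb: "x \<le> beta x" using bU ix xhi lohi i by (auto simp: U_set_def)
  have cj: "crit_of n lam beta j = x" if j: "i \<le> j" "j \<le> x" for j
  proof -
    have "carrel_lo n lam j = lo" "carrel_hi n lam j = hi"
      using lo_same[of i j n lam] hi_same[of i j n lam] j xhi lohi lo_def hi_def by auto
    then have e: "crit_of n lam beta j = Min {y \<in> C. j \<le> y}" unfolding crit_of_def C_def by simp
    have "finite {y \<in> C. j \<le> y}" by (rule finite_subset[of _ "{..hi}"]) (use Cb in auto)
    then show ?thesis unfolding e using xC j xmin by (intro Min_eqI) auto
  qed
  have nc: "int (beta x) - int (beta j) \<le> int x - int j" if j: "i \<le> j" "j \<le> x" for j
  proof (rule ccontr)
    assume a: "\<not> ?thesis"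
    then have jx: "j < x" by (cases "j = x") (use j in auto)
    let ?K = "crit_cands beta lo x"
    have jK: "j \<in> ?K" using a jx j lohi by (auto simp: crit_cands_def)
    have finK: "finite ?K" by (rule finite_subset[of _ "{..<x}"]) (auto simp: crit_cands_def)
    have MK: "Max ?K \<in> ?K" using Max_in[OF finK] jK by blast
    have MC: "Max ?K \<in> C" using crit_set.step[of x beta lo hi] xC jK C_def by auto
    have "j \<le> Max ?K" using Max_ge[OF finK jK] .
    then have "x \<le> Max ?K" using xmin MC j by auto
    then show False using MK by (auto simp: crit_cands_def)
  qed
  have lq: "lam q = lam (Suc q)" if q: "i \<le> q" "q < x" for q
  proof -
    have "q \<notin> R_set n lam" using hi_le_R[of q n lam i] q xhi hi_def by fastforce
    moreover have "lam (Suc q) \<le> lam q" using part q i xhi lohi unfolding is_partition_def by auto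
    ultimately show ?thesis using q i xhi lohi unfolding R_set_def by auto
  qed
  have lj: "lam j = lam x" if j: "i \<le> j" "j \<le> x" for j
    using j(2,1)
  proof (induction j rule: inc_induct)
    case base then show ?case by simp
  next
    case (step k) then show ?case using lq by simp
  qed
  have bj: "beta j \<le> beta x" if j: "i \<le> j" "j \<le> x" for j
  proof -
    have "1 \<le> j \<and> j \<le> n" using j i xhi lohi by linarith
    then have "beta j \<le> platform n lam beta j" using bP by blast
    then show ?thesis using cj[OF j] by (simp add: platform_def)
  qed
  have F: "i \<le> x \<and> x \<le> n \<and> x \<le> beta x \<and> (\<forall>j. i \<le> j \<and> j \<le> x \<longrightarrow>
          lam j = lam x \<and> int (beta x) - int (beta j) \<le> int x - int j \<and> beta j \<le> beta x)"
    using ix xb lj nc bj xhi lohi by (metis order_trans)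
  show ?thesis using F unfolding x_def .
qed


theorem lemma7p1:
  fixes n :: nat and lam beta pi :: "nat \<Rightarrow> nat"
    and Lam :: "nat \<Rightarrow> (nat \<times> nat) list"
  assumes "1 \<le> n"
    and "is_partition n lam"
    and "beta \<in> UBP_set n lam"
    and "pi permutes {1..n}"
    and "Lam \<in> LD_set n lam beta pi"
  shows "\<forall>m. 1 \<le> m \<and> m \<le> n \<longrightarrow>
    (\<exists>k < length (Lam m).
       Lam m ! k = (lam (pi m) + n - pi m, nat (core n lam beta (pi m))) \<and>
       (\<forall>j. k \<le> j \<and> Suc j < length (Lam m) \<longrightarrow>
          Lam m ! Suc j = (fst (Lam m ! j), Suc (snd (Lam m ! j)))))"
proof (intro allI impI)
  fix m assume m: "1 \<le> m \<and> m \<le> n"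
  have perm: "pi permutes {1..n}" by fact
  have np: "n_path n Lam" and termi: "\<And>m. 1 \<le> m \<and> m \<le> n \<Longrightarrow> last (Lam m) = terminal n lam beta (pi m)"
    and disj: "\<And>m m'. 1 \<le> m \<and> m \<le> n \<and> 1 \<le> m' \<and> m' \<le> n \<and> m \<noteq> m' \<Longrightarrow> set (Lam m) \<inter> set (Lam m') = {}"
    using assms(5) unfolding LD_set_def by blast+
  define i where "i = pi m"
  have i: "1 \<le> i" "i \<le> n" using permutes_in_image[OF perm] m i_def by auto
  define x where "x = crit_of n lam beta i"
  have cf: "i \<le> x \<and> x \<le> n \<and> x \<le> beta x \<and> (\<forall>j. i \<le> j \<and> j \<le> x \<longrightarrow>
          lam j = lam x \<and> int (beta x) - int (beta j) \<le> int x - int j \<and> beta j \<le> beta x)"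
    using crit_facts[OF assms(2,3) i] unfolding x_def .
  define k0 where "k0 = lam x + beta x - x"
  have inv_perm: "inv pi permutes {1..n}" using permutes_inv[OF perm] .
  have main: "k0 < length (Lam (inv pi j)) \<and> Lam (inv pi j) ! k0 = (lam x + n - j, beta x + j - x)"
    if "i \<le> j" "j \<le> x" for j
    using that
  proof (induction "x - j" arbitrary: j rule: less_induct)
    case less
    define m' where "m' = inv pi j"
    have jr: "1 \<le> j" "j \<le> n" using less.prems i cf by auto
    have m': "1 \<le> m' \<and> m' \<le> n" using permutes_in_image[OF inv_perm] jr m'_def by auto
    have pm': "pi m' = j" using m'_def permutes_inverses(1)[OF perm] by simp
    define L where "L = Lam m'"
    have lp: "lattice_path L" and hdL: "hd L = (n - m', m')" using np m' L_def unfolding n_path_def by auto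
    have lastL: "last L = (lam j + n - j, beta j)" using termi[OF m'] pm' L_def by (simp add: terminal_def)
    have len: "length L > 0" using lp lattice_path_def by auto
    have sumlast: "fst (last L) + snd (last L) = n + (length L - 1)"
      using path_sum[OF lp, of "length L - 1"] len hdL m' path_last[OF lp] by (simp add: lattice_path_def) (use len in linarith)
    have cj: "lam j = lam x" "int (beta x) - int (beta j) \<le> int x - int j" "beta j \<le> beta x"
      using cf less.prems by blast+
    have xb: "x \<le> beta x" "x \<le> n" using cf by blast+
    have sl: "lam j + n - j + beta j = n + (length L - 1)" using sumlast lastL by simp
    have A: "beta x + j \<le> beta j + x" using cj(2) by linarith
    have C: "n - j + j = n" using jr by simp
    have C2: "lam j + n - j = lam j + (n - j)" using jr by simp
    have D: "lam x + beta x - x + x = lam x + beta x" using xb by simp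
    have E: "length L - 1 + 1 = length L" using len by simp
    have k0L: "k0 < length L" using sl A C C2 D E cj(1) unfolding k0_def by linarith
    obtain a b where ab: "L ! k0 = (a, b)" by fastforce
    have sab: "a + b = n + k0" using path_sum[OF lp k0L] ab hdL m' by simp
    have mono: "a \<le> lam j + n - j" "b \<le> beta j"
      using path_mono[OF lp, of k0 "length L - 1"] k0L ab lastL path_last[OF lp] by auto
    have acol: "a = lam x + n - j"
    proof (rule ccontr)
      assume ne: "a \<noteq> lam x + n - j"
      define j' where "j' = lam x + n - a"
      have a1: "a \<le> lam x + (n - j)" using mono(1) C2 cj(1) by simp
      have a2: "a \<noteq> lam x + (n - j)" using ne C2 cj(1) by simp
      have F: "j' + a = lam x + n" using a1 C unfolding j'_def by linarith
      have K: "k0 + x = lam x + beta x" using D unfolding k0_def .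
      have j'r: "j < j'" "j' \<le> x" using a1 a2 F C K sab mono(2) cj(3) by linarith+
      have IH: "k0 < length (Lam (inv pi j')) \<and> Lam (inv pi j') ! k0 = (lam x + n - j', beta x + j' - x)"
        using less.hyps[of j'] j'r less.prems by auto
      have eqp: "(lam x + n - j', beta x + j' - x) = (a, b)"
      proof -
        have G: "beta x + j' - x + x = beta x + j'" using xb by simp
        have "lam x + n - j' = a" using F by simp
        moreover have "beta x + j' - x = b" using G F K sab by linarith
        ultimately show ?thesis by simp
      qed
      have in1: "(a, b) \<in> set L" using ab k0L by (metis nth_mem)
      have in2: "(a, b) \<in> set (Lam (inv pi j'))" using IH eqp by (metis nth_mem)
      have "j' \<in> {1..n}" using j'r xb jr by simp
      then have "inv pi j' \<in> {1..n}" using permutes_in_image[OF inv_perm] by blast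
      then have m2: "1 \<le> inv pi j' \<and> inv pi j' \<le> n" by simp
      have "inv pi j' \<noteq> m'" using j'r m'_def permutes_inverses(1)[OF perm] by (metis less_irrefl)
      then show False using disj[of m' "inv pi j'"] m' m2 in1 in2 L_def by auto
    qed
    have H: "beta x + j - x + x = beta x + j" using xb by simp
    have K: "k0 + x = lam x + beta x" using D unfolding k0_def .
    have "b = beta x + j - x" using acol C C2 cj(1) sab H K by linarith
    then show ?case using k0L ab acol L_def m'_def by simp
  qed
  have cfi: "i \<le> x" "x \<le> beta x" using cf by blast+
  have mi: "inv pi i = m" using i_def permutes_inverses(2)[OF perm] by simp
  have M: "k0 < length (Lam m) \<and> Lam m ! k0 = (lam x + n - i, beta x + i - x)"
    using main[of i] cfi mi by simp
  have lpm: "lattice_path (Lam m)" using np m unfolding n_path_def by auto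
  have lastm: "last (Lam m) = (lam i + n - i, beta i)" using termi[OF m] i_def by (simp add: terminal_def)
  have li: "lam i = lam x" using cf by blast
  have core: "nat (core n lam beta i) = beta x + i - x"
    using cfi unfolding core_def x_def[symmetric] by auto
  show "\<exists>k < length (Lam m).
       Lam m ! k = (lam (pi m) + n - pi m, nat (core n lam beta (pi m))) \<and>
       (\<forall>j. k \<le> j \<and> Suc j < length (Lam m) \<longrightarrow>
          Lam m ! Suc j = (fst (Lam m ! j), Suc (snd (Lam m ! j))))"
  proof (intro exI conjI)
    show "k0 < length (Lam m)" using M by simp
    show "Lam m ! k0 = (lam (pi m) + n - pi m, nat (core n lam beta (pi m)))"
      using M core li i_def by simp
    show "\<forall>j. k0 \<le> j \<and> Suc j < length (Lam m) \<longrightarrow>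
          Lam m ! Suc j = (fst (Lam m ! j), Suc (snd (Lam m ! j)))"
      using path_tail[OF lpm, of k0] M lastm li by simp
  qed
qed

end
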